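(* Fix $q\in(0,1]$ and $\delta\in(0,1)$. With probability at least $1-\delta/3$, for all $t\in[T]$ and $a\in[K]$ with $N_{t,a}\ge1$, $$\hat\mu^+_{t,a}-\hat\mu^-_{t,a}\ \le\ \frac{N_{t,a}-N_{t-d_a(q),a}}{N_{t,a}}+1-q+\sqrt{\frac{\log(3KT/\delta)}{2N_{t,a}}}.$$
   Context: Combinatorial semi-bandit with (possibly reward-dependent) delayed feedback: $K$ arms, horizon $T$; at each round $t$ the learner picks (based on the history of past choices and observed feedback) a vector $p_t\in[0,1]^K$ with $\sum_a p_{t,a}=L$ and a random set $A_t\subseteq[K]$, $|A_t|=L$, with $\Pr(a\in A_t\mid\text{history},p_t)=p_{t,a}$. Each arm $a$ has pairs $(R_{t,a},D_{t,a})$, $t\ge1$, with $R_{t,a}\in[0,1]$ and delay $D_{t,a}\in\{0,1,\dots\}\cup\{\infty\}$; for each arm the pairs are i.i.d. across rounds and independent of everything before round $t$. The feedback of arm $a\in A_s$ is observed at round $t$ iff $s+D_{s,a}<t$. $N_{t,a}=\sum_{s<t}\mathbb 1\{a\in A_s\}$ (with $N_{t,a}=0$ for $t\le1$, including nonpositive $t$), $M_{t,a}=\sum_{s<t}\mathbb 1\{a\in A_s,\ s+D_{s,a}<t\}$, $S_{t,a}=\sum_{s<t}R_{s,a}\mathbb 1\{a\in A_s,\ s+D_{s,a}<t\}$, $\hat\mu^+_{t,a}=\frac{S_{t,a}+(N_{t,a}-M_{t,a})}{N_{t,a}}$, $\hat\mu^-_{t,a}=\frac{S_{t,a}}{N_{t,a}}$.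 The $q$-quantile of arm $a$'s delay is $d_a(q)=\min\{\gamma\in\mathbb N:\Pr(D_{1,a}\le\gamma)\ge q\}$. *)

theory Defs
  imports "HOL-Probability.Probability"
begin

text \<open>Rounds are natural numbers t >= 1,
  arms are 1..K.  A t w is the set of arms played at round t (outcome w),
  R t a w the reward and D t a w the (possibly infinite) delay of arm a at round t.\<close>

text \<open>Number of plays of arm a before round t; t is an integer so that
  nonpositive indices t give 0.\<close>
definition Nplays :: "(nat \<Rightarrow> 'w \<Rightarrow> nat set) \<Rightarrow> int \<Rightarrow> nat \<Rightarrow> 'w \<Rightarrow> nat" where
  "Nplays A t a w = card {s::nat. 1 \<le> s \<and> int s < t \<and> a \<in> A s w}"

definition Mobs :: "(nat \<Rightarrow> 'w \<Rightarrow> nat set) \<Rightarrow> (nat \<Rightarrow> nat \<Rightarrow> 'w \<Rightarrow> enat)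
    \<Rightarrow> nat \<Rightarrow> nat \<Rightarrow> 'w \<Rightarrow> nat" where
  "Mobs A D t a w = card {s::nat. 1 \<le> s \<and> s < t \<and> a \<in> A s w \<and> enat s + D s a w < enat t}"

definition Sobs :: "(nat \<Rightarrow> 'w \<Rightarrow> nat set) \<Rightarrow> (nat \<Rightarrow> nat \<Rightarrow> 'w \<Rightarrow> real)
    \<Rightarrow> (nat \<Rightarrow> nat \<Rightarrow> 'w \<Rightarrow> enat) \<Rightarrow> nat \<Rightarrow> nat \<Rightarrow> 'w \<Rightarrow> real" where
  "Sobs A R D t a w =
     (\<Sum>s\<in>{s::nat. 1 \<le> s \<and> s < t \<and> a \<in> A s w \<and> enat s + D s a w < enat t}. R s a w)"

definition mu_plus :: "(nat \<Rightarrow> 'w \<Rightarrow> nat set) \<Rightarrow> (nat \<Rightarrow> nat \<Rightarrow> 'w \<Rightarrow> real)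
    \<Rightarrow> (nat \<Rightarrow> nat \<Rightarrow> 'w \<Rightarrow> enat) \<Rightarrow> nat \<Rightarrow> nat \<Rightarrow> 'w \<Rightarrow> real" where
  "mu_plus A R D t a w =
     (Sobs A R D t a w + (real (Nplays A (int t) a w) - real (Mobs A D t a w)))
       / real (Nplays A (int t) a w)"

definition mu_minus :: "(nat \<Rightarrow> 'w \<Rightarrow> nat set) \<Rightarrow> (nat \<Rightarrow> nat \<Rightarrow> 'w \<Rightarrow> real)
    \<Rightarrow> (nat \<Rightarrow> nat \<Rightarrow> 'w \<Rightarrow> enat) \<Rightarrow> nat \<Rightarrow> nat \<Rightarrow> 'w \<Rightarrow> real" where
  "mu_minus A R D t a w = Sobs A R D t a w / real (Nplays A (int t) a w)"

definition delay_quantile :: "'w measure \<Rightarrow> (nat \<Rightarrow> nat \<Rightarrow> 'w \<Rightarrow> enat) \<Rightarrow> nat \<Rightarrow> real \<Rightarrow> enat" where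
  "delay_quantile M D a q =
     (if \<exists>\<gamma>::nat. measure M {w \<in> space M. D 1 a w \<le> enat \<gamma>} \<ge> q
      then enat (LEAST \<gamma>::nat. measure M {w \<in> space M. D 1 a w \<le> enat \<gamma>} \<ge> q)
      else \<infinity>)"

definition Nplays_shift :: "(nat \<Rightarrow> 'w \<Rightarrow> nat set) \<Rightarrow> nat \<Rightarrow> enat \<Rightarrow> nat \<Rightarrow> 'w \<Rightarrow> nat" where
  "Nplays_shift A t d a w = (case d of enat k \<Rightarrow> Nplays A (int t - int k) a w | \<infinity> \<Rightarrow> 0)"

end

theory Submission
  imports Defs
begin


definition pl :: "(nat \<Rightarrow> 'w \<Rightarrow> nat set) \<Rightarrow> nat \<Rightarrow> nat \<Rightarrow> 'w \<Rightarrow> real" where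
  "pl A a s w = (if a \<in> A s w then 1 else 0)"
definition Yd :: "(nat \<Rightarrow> nat \<Rightarrow> 'w \<Rightarrow> enat) \<Rightarrow> nat \<Rightarrow> nat \<Rightarrow> nat \<Rightarrow> 'w \<Rightarrow> real" where
  "Yd D a d s w = (if enat d < D s a w then 1 else 0)"
definition cnt :: "(nat \<Rightarrow> 'w \<Rightarrow> nat set) \<Rightarrow> nat \<Rightarrow> nat \<Rightarrow> 'w \<Rightarrow> real" where
  "cnt A a m w = (\<Sum>s\<in>{1..<m}. pl A a s w)"
definition Bv :: "(nat \<Rightarrow> 'w \<Rightarrow> nat set) \<Rightarrow> nat \<Rightarrow> nat \<Rightarrow> nat \<Rightarrow> 'w \<Rightarrow> real" where
  "Bv A a n s w = (if a \<in> A s w \<and> cnt A a s w < real n then 1 else 0)"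
definition Zv where
  "Zv A D a d n p m w = (\<Sum>s\<in>{1..<m}. Bv A a n s w * (Yd D a d s w - p))"
definition Cv where
  "Cv A a n m w = (\<Sum>s\<in>{1..<m}. Bv A a n s w)"
definition Gv where
  "Gv A D a d n p lam m w = exp (lam * Zv A D a d n p m w - lam^2/8 * Cv A a n m w)"

lemma pred_count:
  "f \<in> measurable N (count_space UNIV) \<Longrightarrow> {w\<in>space N. P (f w)} \<in> sets N"
  using measurable_sets[of f N "count_space UNIV" "{x. P x}"] by (simp add: vimage_def Int_def conj_commute)

lemma snd_meas:
  "(\<lambda>w. (f w, g w)) \<in> measurable N (borel \<Otimes>\<^sub>M count_space UNIV) \<Longrightarrow> g \<in> measurable N (count_space UNIV)"
  using measurable_compose[OF _ measurable_snd] by fastforce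

lemma fst_meas:
  "(\<lambda>w. (f w, g w)) \<in> measurable N (borel \<Otimes>\<^sub>M count_space UNIV) \<Longrightarrow> f \<in> borel_measurable N"
  using measurable_compose[OF _ measurable_fst] by fastforce

lemma meas_pl: "{w\<in>space N. a\<in>A s w} \<in> sets N \<Longrightarrow> (\<lambda>w. pl A a s w) \<in> borel_measurable N"
  unfolding pl_def by (rule measurable_If) auto

lemma meas_Yd: "{w\<in>space N. enat d < D s a w} \<in> sets N \<Longrightarrow> (\<lambda>w. Yd D a d s w) \<in> borel_measurable N"
  unfolding Yd_def by (rule measurable_If) auto

lemma meas_cnt: "(\<And>s. 1 \<le> s \<Longrightarrow> s < m \<Longrightarrow> {w\<in>space N. a\<in>A s w} \<in> sets N)
   \<Longrightarrow> (\<lambda>w. cnt A a m w) \<in> borel_measurable N"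
  unfolding cnt_def by (rule borel_measurable_sum) (auto intro: meas_pl)

lemma meas_Bv: "(\<And>s'. 1 \<le> s' \<Longrightarrow> s' \<le> s \<Longrightarrow> {w\<in>space N. a\<in>A s' w} \<in> sets N) \<Longrightarrow> 1 \<le> s
   \<Longrightarrow> (\<lambda>w. Bv A a n s w) \<in> borel_measurable N"
  unfolding Bv_def
  apply (rule measurable_If, simp, simp)
  apply (rule sets.sets_Collect_conj)
  apply simp
  apply (rule borel_measurable_less)
   apply (rule meas_cnt) apply auto
  done

lemma meas_Gv:
  assumes "\<And>s'. 1 \<le> s' \<Longrightarrow> s' < m \<Longrightarrow> {w\<in>space N. a\<in>A s' w} \<in> sets N"
    and "\<And>s'. 1 \<le> s' \<Longrightarrow> s' < m \<Longrightarrow> {w\<in>space N. enat d < D s' a w} \<in> sets N"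
  shows "(\<lambda>w. Gv A D a d n p lam m w) \<in> borel_measurable N"
proof -
  have B: "(\<lambda>w. Bv A a n s w) \<in> borel_measurable N" if "s \<in> {1..<m}" for s
    using that by (intro meas_Bv assms) auto
  have Y: "(\<lambda>w. Yd D a d s w) \<in> borel_measurable N" if "s \<in> {1..<m}" for s
    using that by (intro meas_Yd assms) auto
  show ?thesis unfolding Gv_def Zv_def Cv_def
    using B Y by measurable
qed


locale setting = prob_space M for M :: "'w measure" +
  fixes F :: "nat \<Rightarrow> 'w measure"
    and A :: "nat \<Rightarrow> 'w \<Rightarrow> nat set"
    and R :: "nat \<Rightarrow> nat \<Rightarrow> 'w \<Rightarrow> real"
    and D :: "nat \<Rightarrow> nat \<Rightarrow> 'w \<Rightarrow> enat"
  assumes F_space: "\<And>t. space (F t) = space M"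
    and F_sub: "\<And>t. sets (F t) \<subseteq> sets M"
    and F_mono: "\<And>s t. s \<le> t \<Longrightarrow> sets (F s) \<subseteq> sets (F t)"
    and A_meas: "\<And>t a. 1 \<le> t \<Longrightarrow> {w \<in> space M. a \<in> A t w} \<in> sets (F t)"
    and RD_meas: "\<And>s t a. 1 \<le> s \<Longrightarrow> s < t \<Longrightarrow>
        (\<lambda>w. (R s a w, D s a w)) \<in> measurable (F t) (borel \<Otimes>\<^sub>M count_space UNIV)"
    and RD_meas_M: "\<And>t a. 1 \<le> t \<Longrightarrow>
        (\<lambda>w. (R t a w, D t a w)) \<in> measurable M (borel \<Otimes>\<^sub>M count_space UNIV)"
    and RD_indep: "\<And>t a. 1 \<le> t \<Longrightarrow>
        prob_space.indep_set M (sets (F t))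
          (sets (vimage_algebra (space M) (\<lambda>w. (R t a w, D t a w))
                   (borel \<Otimes>\<^sub>M count_space UNIV)))"
    and RD_ident: "\<And>t a. 1 \<le> t \<Longrightarrow>
        distr M (borel \<Otimes>\<^sub>M count_space UNIV) (\<lambda>w. (R t a w, D t a w))
        = distr M (borel \<Otimes>\<^sub>M count_space UNIV) (\<lambda>w. (R 1 a w, D 1 a w))"
begin

lemma F_to_M: "f \<in> borel_measurable (F m) \<Longrightarrow> f \<in> borel_measurable M"
  using measurable_mono[of borel borel "F m" M] F_sub F_space by auto

lemma A_F: "1 \<le> s \<Longrightarrow> s \<le> m \<Longrightarrow> {w\<in>space (F m). a\<in>A s w} \<in> sets (F m)"
  using A_meas[of s a] F_mono[of s m] F_space by auto

lemma A_M: "1 \<le> s \<Longrightarrow> {w\<in>space M. a\<in>A s w} \<in> sets M"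
  using A_meas[of s a] F_sub[of s] by auto

lemma D_F: "1 \<le> s \<Longrightarrow> s < m \<Longrightarrow> {w\<in>space (F m). P (D s a w)} \<in> sets (F m)"
  by (rule pred_count, rule snd_meas, rule RD_meas)

lemma D_M: "1 \<le> s \<Longrightarrow> {w\<in>space M. P (D s a w)} \<in> sets M"
  by (rule pred_count, rule snd_meas, rule RD_meas_M)

lemma G_F: "(\<lambda>w. Gv A D a d n p lam m w) \<in> borel_measurable (F m)"
  by (rule meas_Gv) (auto intro: A_F D_F)

lemma B_F: "1 \<le> m \<Longrightarrow> (\<lambda>w. Bv A a n m w) \<in> borel_measurable (F m)"
  by (rule meas_Bv) (auto intro: A_F)

lemma G_M: "(\<lambda>w. Gv A D a d n p lam m w) \<in> borel_measurable M"
  by (rule F_to_M, rule G_F)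

lemma B_M: "1 \<le> m \<Longrightarrow> (\<lambda>w. Bv A a n m w) \<in> borel_measurable M"
  by (rule F_to_M, rule B_F)

lemma indep_FV:
  assumes X: "X \<in> borel_measurable (F m)" and h: "h \<in> borel_measurable (borel \<Otimes>\<^sub>M count_space UNIV)"
    and m: "1 \<le> m"
  shows "indep_var borel X borel (\<lambda>w. h (R m a w, D m a w))"
proof -
  let ?V = "vimage_algebra (space M) (\<lambda>w. (R m a w, D m a w)) (borel \<Otimes>\<^sub>M count_space UNIV)"
  have I: "indep_set (sets (F m)) (sets ?V)" using RD_indep[OF m] .
  have rv1: "random_variable borel X" using F_to_M[OF X] .
  have rv2: "random_variable borel (\<lambda>w. h (R m a w, D m a w))"
    using measurable_compose[OF RD_meas_M[OF m] h] by simp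
  have S1: "sigma_sets (space M) {X -` B \<inter> space M | B. B \<in> sets borel} \<subseteq> sets (F m)"
  proof -
    have "{X -` B \<inter> space M | B. B \<in> sets borel} \<subseteq> sets (F m)"
    proof
      fix x assume "x \<in> {X -` B \<inter> space M | B. B \<in> sets borel}"
      then obtain B where B: "B \<in> sets borel" and x: "x = X -` B \<inter> space M" by blast
      show "x \<in> sets (F m)" unfolding x using measurable_sets[OF X B] F_space by simp
    qed
    then have "sigma_sets (space (F m)) {X -` B \<inter> space M | B. B \<in> sets borel} \<subseteq> sets (F m)"
      by (rule sets.sigma_sets_subset)
    then show ?thesis using F_space by simp
  qed
  have S2: "sigma_sets (space M) {(\<lambda>w. h (R m a w, D m a w)) -` B \<inter> space M | B. B \<in> sets borel} \<subseteq> sets ?V"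
  proof -
    have "{(\<lambda>w. h (R m a w, D m a w)) -` B \<inter> space M | B. B \<in> sets borel} \<subseteq> sets ?V"
    proof
      fix x assume "x \<in> {(\<lambda>w. h (R m a w, D m a w)) -` B \<inter> space M | B. B \<in> sets borel}"
      then obtain B where B: "B \<in> sets borel" and x: "x = (\<lambda>w. h (R m a w, D m a w)) -` B \<inter> space M" by auto
      have hB: "h -` B \<inter> space (borel \<Otimes>\<^sub>M count_space UNIV) \<in> sets (borel \<Otimes>\<^sub>M count_space UNIV)"
        using measurable_sets[OF h B] .
      have "x = (\<lambda>w. (R m a w, D m a w)) -` (h -` B \<inter> space (borel \<Otimes>\<^sub>M count_space UNIV)) \<inter> space M"
        unfolding x by (auto simp: space_pair_measure)
      then show "x \<in> sets ?V" unfolding sets_vimage_algebra using hB by (blast intro: sigma_sets.Basic)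
    qed
    then have "sigma_sets (space ?V) {(\<lambda>w. h (R m a w, D m a w)) -` B \<inter> space M | B. B \<in> sets borel} \<subseteq> sets ?V"
      by (rule sets.sigma_sets_subset)
    then show ?thesis by simp
  qed
  have "indep_set (sigma_sets (space M) {X -` B \<inter> space M | B. B \<in> sets borel})
      (sigma_sets (space M) {(\<lambda>w. h (R m a w, D m a w)) -` B \<inter> space M | B. B \<in> sets borel})"
    using I S1 S2 unfolding indep_sets2_eq by (meson subset_iff)
  then show ?thesis unfolding indep_var_eq using rv1 rv2 by blast
qed


lemma int_bdd: "(f::_\<Rightarrow>real) \<in> borel_measurable M \<Longrightarrow> (\<And>w. w\<in>space M \<Longrightarrow> \<bar>f w\<bar> \<le> (B::real)) \<Longrightarrow> integrable M f"
  by (rule integrable_const_bound[where B=B]) (auto intro: AE_I2)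

lemma Y_M: "1 \<le> m \<Longrightarrow> (\<lambda>w. Yd D a d m w) \<in> borel_measurable M"
  by (rule meas_Yd, rule D_M)

lemma hoeff_step:
  assumes m: "1 \<le> m" and lam: "lam > 0" and pp: "prob {w\<in>space M. enat d < D m a w} \<le> p"
  shows "expectation (\<lambda>w. exp (lam * (Yd D a d m w - p) - lam^2/8)) \<le> 1"
proof -
  let ?Y = "\<lambda>w. Yd D a d m w"
  let ?S = "{w\<in>space M. enat d < D m a w}"
  have Ym: "?Y \<in> borel_measurable M" using Y_M[OF m] .
  interpret I: interval_bounded_random_variable M ?Y 0 1
    proof unfold_locales
    show "random_variable borel ?Y" by (rule Ym)
    show "AE x in M. ?Y x \<in> {0..1}" by (rule AE_I2) (simp add: Yd_def)
  qed
  have Sm: "?S \<in> sets M" using D_M[OF m] .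
  have "expectation ?Y = expectation (indicator ?S)"
    by (rule Bochner_Integration.integral_cong) (auto simp: Yd_def indicator_def)
  also have "\<dots> = prob ?S" using Sm by (simp add: emeasure_finite)
  finally have EY: "expectation ?Y = prob ?S" .
  define c where "c = expectation ?Y"
  have cp: "c \<le> p" using EY pp c_def by simp
  have c01: "0 \<le> c" "c \<le> 1" using EY c_def by auto
  have nn: "(\<integral>\<^sup>+w. exp (lam * (?Y w - c)) \<partial>M) \<le> ennreal (exp (lam^2 * (1 - 0)^2 / 8))"
    unfolding c_def by (rule I.Hoeffdings_lemma_nn_integral[OF lam])
  have "expectation (\<lambda>w. exp (lam * (?Y w - c))) = enn2real (\<integral>\<^sup>+w. ennreal (exp (lam * (?Y w - c))) \<partial>M)"
    proof (rule integral_eq_nn_integral)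
    show "(\<lambda>w. exp (lam * (?Y w - c))) \<in> borel_measurable M" using Ym by measurable
  qed (rule AE_I2, simp)
  also have "\<dots> \<le> exp (lam^2 / 8)"
    using nn by (intro enn2real_leI) auto
  finally have E1: "expectation (\<lambda>w. exp (lam * (?Y w - c))) \<le> exp (lam^2 / 8)" .
  have int1: "integrable M (\<lambda>w. exp (lam * (?Y w - c)))"
  proof (rule int_bdd[where B="exp lam"])
    show "(\<lambda>w. exp (lam * (?Y w - c))) \<in> borel_measurable M" using Ym by measurable
    fix w show "\<bar>exp (lam * (?Y w - c))\<bar> \<le> exp lam"
    proof -
      have "?Y w - c \<le> 1" using c01 by (simp add: Yd_def)
      then have "lam * (?Y w - c) \<le> lam * 1" using lam by (intro mult_left_mono) auto
      then show ?thesis by simp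
    qed
  qed
  have int2: "integrable M (\<lambda>w. exp (lam * (?Y w - p) - lam^2/8))"
  proof (rule int_bdd[where B="exp lam"])
    show "(\<lambda>w. exp (lam * (?Y w - p) - lam^2/8)) \<in> borel_measurable M" using Ym by measurable
    fix w show "\<bar>exp (lam * (?Y w - p) - lam^2/8)\<bar> \<le> exp lam"
    proof -
      have "?Y w - p \<le> 1" using c01 cp by (simp add: Yd_def)
      then have "lam * (?Y w - p) \<le> lam * 1" using lam by (intro mult_left_mono) auto
      moreover have "0 \<le> lam^2/8" by simp
      ultimately have "lam * (?Y w - p) - lam^2/8 \<le> lam" by linarith
      then show ?thesis by simp
    qed
  qed
  have "expectation (\<lambda>w. exp (lam * (?Y w - p) - lam^2/8))
      \<le> expectation (\<lambda>w. exp (lam * (?Y w - c)) * exp (-(lam^2/8)))"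
  proof (rule integral_mono[OF int2])
    show "integrable M (\<lambda>w. exp (lam * (?Y w - c)) * exp (-(lam^2/8)))" using int1 by simp
    fix w
    have "lam * (?Y w - p) \<le> lam * (?Y w - c)" using lam cp by (intro mult_left_mono) auto
    then show "exp (lam * (?Y w - p) - lam^2/8) \<le> exp (lam * (?Y w - c)) * exp (-(lam^2/8))"
      by (simp add: exp_add[symmetric])
  qed
  also have "\<dots> = expectation (\<lambda>w. exp (lam * (?Y w - c))) * exp (-(lam^2/8))" by simp
  also have "\<dots> \<le> exp (lam^2 / 8) * exp (-(lam^2/8))" using E1 by (intro mult_right_mono) auto
  also have "\<dots> = 1" by (simp add: exp_add[symmetric])
  finally show ?thesis .
qed

lemma Bv01: "Bv A a n s w = 0 \<or> Bv A a n s w = 1" by (simp add: Bv_def)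

lemma G_rec:
  assumes m: "1 \<le> m"
  shows "Gv A D a d n p lam (Suc m) w = Gv A D a d n p lam m w *
     (Bv A a n m w * exp (lam * (Yd D a d m w - p) - lam^2/8) + (1 - Bv A a n m w))"
proof -
  have Z: "Zv A D a d n p (Suc m) w = Zv A D a d n p m w + Bv A a n m w * (Yd D a d m w - p)"
    unfolding Zv_def using m by (simp add: atLeastLessThanSuc)
  have C: "Cv A a n (Suc m) w = Cv A a n m w + Bv A a n m w"
    unfolding Cv_def using m by (simp add: atLeastLessThanSuc)
  show ?thesis
  proof (cases "Bv A a n m w = 0")
    case True then show ?thesis unfolding Gv_def Z C by simp
  next
    case False then have "Bv A a n m w = 1" using Bv01 by blast
    then show ?thesis unfolding Gv_def Z C by (simp add: exp_add[symmetric] algebra_simps)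
  qed
qed

lemma Z_bdd:
  assumes "0 \<le> p" "p \<le> 1"
  shows "\<bar>Zv A D a d n p m w\<bar> \<le> real m"
proof -
  have "\<bar>Zv A D a d n p m w\<bar> \<le> (\<Sum>s\<in>{1..<m}. \<bar>Bv A a n s w * (Yd D a d s w - p)\<bar>)"
    unfolding Zv_def by (rule sum_abs)
  also have "\<dots> \<le> (\<Sum>s\<in>{1..<m}. 1)"
  proof (rule sum_mono)
    fix s show "\<bar>Bv A a n s w * (Yd D a d s w - p)\<bar> \<le> 1"
      using assms by (auto simp: Bv_def Yd_def)
  qed
  also have "\<dots> \<le> real m" by simp
  finally show ?thesis .
qed

lemma C_nonneg: "0 \<le> Cv A a n m w"
  unfolding Cv_def by (rule sum_nonneg) (simp add: Bv_def)

lemma G_bdd: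
  assumes "0 \<le> p" "p \<le> 1" "0 \<le> lam"
  shows "\<bar>Gv A D a d n p lam m w\<bar> \<le> exp (lam * real m)"
proof -
  have "\<bar>Zv A D a d n p m w\<bar> \<le> real m" by (rule Z_bdd[OF assms(1,2)])
  then have "Zv A D a d n p m w \<le> real m" by linarith
  then have "lam * Zv A D a d n p m w \<le> lam * real m"
    using assms(3) by (rule mult_left_mono)
  moreover have "0 \<le> lam^2/8 * Cv A a n m w" using C_nonneg by simp
  ultimately show ?thesis unfolding Gv_def by simp
qed

lemma G_int:
  assumes "0 \<le> p" "p \<le> 1" "0 \<le> lam"
  shows "integrable M (\<lambda>w. Gv A D a d n p lam m w)"
  by (rule int_bdd[OF G_M G_bdd[OF assms]])

lemma G_exp:
  assumes p: "0 \<le> p" "p \<le> 1" and lam: "0 < lam"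
    and pp: "\<And>m. 1 \<le> m \<Longrightarrow> prob {w\<in>space M. enat d < D m a w} \<le> p"
  shows "expectation (\<lambda>w. Gv A D a d n p lam m w) \<le> 1"
proof (induction m)
  case 0
  have "(\<lambda>w. Gv A D a d n p lam 0 w) = (\<lambda>w. 1)" by (simp add: Gv_def Zv_def Cv_def)
  then show ?case by (simp add: prob_space)
next
  case (Suc m)
  show ?case
  proof (cases "m = 0")
    case True
    have "(\<lambda>w. Gv A D a d n p lam (Suc m) w) = (\<lambda>w. 1)" using True by (simp add: Gv_def Zv_def Cv_def)
    then show ?thesis by (simp add: prob_space)
  next
    case False
    then have m: "1 \<le> m" by simp
    let ?g = "\<lambda>w. Gv A D a d n p lam m w"
    let ?b = "\<lambda>w. Bv A a n m w"
    let ?h = "\<lambda>w. exp (lam * (Yd D a d m w - p) - lam^2/8)"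
    define h' where "h' = (\<lambda>x::real \<times> enat. exp (lam * ((if enat d < snd x then 1 else 0) - p) - lam^2/8))"
    have hh: "?h = (\<lambda>w. h' (R m a w, D m a w))" by (simp add: h'_def Yd_def)
    have h'm: "h' \<in> borel_measurable (borel \<Otimes>\<^sub>M count_space UNIV)" unfolding h'_def by measurable
    have gbF: "(\<lambda>w. ?g w * ?b w) \<in> borel_measurable (F m)"
      using G_F B_F[OF m] by measurable
    have ind: "indep_var borel (\<lambda>w. ?g w * ?b w) borel ?h"
      unfolding hh by (rule indep_FV[OF gbF h'm m])
    have gm: "?g \<in> borel_measurable M" by (rule G_M)
    have bm: "?b \<in> borel_measurable M" by (rule B_M[OF m])
    have hm: "?h \<in> borel_measurable M" using Y_M[OF m] by measurable
    have gbd: "\<And>w. \<bar>?g w\<bar> \<le> exp (lam * real m)" using G_bdd p lam by simp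
    have bbd: "\<And>w. \<bar>?b w\<bar> \<le> 1" by (simp add: Bv_def)
    have hbd: "\<And>w. \<bar>?h w\<bar> \<le> exp lam"
    proof -
      fix w
      have "Yd D a d m w - p \<le> 1" using p by (simp add: Yd_def)
      then have "lam * (Yd D a d m w - p) \<le> lam * 1" using lam by (intro mult_left_mono) auto
      moreover have "0 \<le> lam^2/8" by simp
      ultimately have "lam * (Yd D a d m w - p) - lam^2/8 \<le> lam" by linarith
      then show "\<bar>?h w\<bar> \<le> exp lam" by simp
    qed
    have int_gb: "integrable M (\<lambda>w. ?g w * ?b w)"
    proof (rule int_bdd[where B="exp (lam * real m) * 1"])
      show "(\<lambda>w. ?g w * ?b w) \<in> borel_measurable M" using gm bm by measurable
      fix w show "\<bar>?g w * ?b w\<bar> \<le> exp (lam * real m) * 1"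
        unfolding abs_mult by (rule mult_mono[OF gbd bbd]) auto
    qed
    have int_h: "integrable M ?h" by (rule int_bdd[OF hm hbd])
    have int_g1b: "integrable M (\<lambda>w. ?g w * (1 - ?b w))"
    proof (rule int_bdd[where B="exp (lam * real m) * 1"])
      show "(\<lambda>w. ?g w * (1 - ?b w)) \<in> borel_measurable M" using gm bm by measurable
      fix w have "\<bar>1 - ?b w\<bar> \<le> 1" by (simp add: Bv_def)
      then show "\<bar>?g w * (1 - ?b w)\<bar> \<le> exp (lam * real m) * 1"
        unfolding abs_mult by (intro mult_mono[OF gbd]) auto
    qed
    have int_gbh: "integrable M (\<lambda>w. (?g w * ?b w) * ?h w)"
      by (rule indep_var_integrable[OF ind int_gb int_h])
    have geq: "(\<lambda>w. Gv A D a d n p lam (Suc m) w) = (\<lambda>w. (?g w * ?b w) * ?h w + ?g w * (1 - ?b w))"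
      by (rule ext, unfold G_rec[OF m]) (simp add: algebra_simps)
    have E1: "expectation (\<lambda>w. Gv A D a d n p lam (Suc m) w)
       = expectation (\<lambda>w. (?g w * ?b w) * ?h w) + expectation (\<lambda>w. ?g w * (1 - ?b w))"
      unfolding geq by (rule Bochner_Integration.integral_add[OF int_gbh int_g1b])
    have E2: "expectation (\<lambda>w. (?g w * ?b w) * ?h w) = expectation (\<lambda>w. ?g w * ?b w) * expectation ?h"
      by (rule indep_var_lebesgue_integral[OF ind int_gb int_h])
    have E3: "expectation (\<lambda>w. ?g w * ?b w) * expectation ?h \<le> expectation (\<lambda>w. ?g w * ?b w)"
    proof -
      have "expectation ?h \<le> 1" by (rule hoeff_step[OF m lam pp[OF m]])
      moreover have "0 \<le> expectation (\<lambda>w. ?g w * ?b w)"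
        by (rule integral_nonneg_AE, rule AE_I2) (simp add: Gv_def Bv_def)
      ultimately show ?thesis using mult_left_mono[of "expectation ?h" 1] by fastforce
    qed
    have E4: "expectation (\<lambda>w. ?g w * ?b w) + expectation (\<lambda>w. ?g w * (1 - ?b w))
          = expectation (\<lambda>w. ?g w * ?b w + ?g w * (1 - ?b w))"
      by (rule Bochner_Integration.integral_add[symmetric, OF int_gb int_g1b])
    have E5: "(\<lambda>w. ?g w * ?b w + ?g w * (1 - ?b w)) = ?g"
      by (rule ext) (simp add: algebra_simps)
    have "expectation ?g \<le> 1" by (rule Suc.IH)
    have E6: "expectation (\<lambda>w. ?g w * ?b w) + expectation (\<lambda>w. ?g w * (1 - ?b w)) = expectation ?g"
      using E4 unfolding E5 .
    then show ?thesis using E1 E2 E3 \<open>expectation ?g \<le> 1\<close> by linarith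
  qed
qed

end




lemma sum_ind_card: "finite S \<Longrightarrow> (\<Sum>s\<in>S. if P s then 1 else 0::real) = real (card {s\<in>S. P s})"
  by (metis (mono_tags, lifting) real_of_card[of "{uub \<in> S. P uub}"] sum.inter_filter[of S "\<lambda>uu. 1" P])

lemma cnt_card: "cnt A a m w = real (card {s\<in>{1..<m}. a \<in> A s w})"
  unfolding cnt_def pl_def by (rule sum_ind_card) simp

lemma Nplays_cnt: "real (Nplays A i a w) = cnt A a (nat i) w"
proof -
  have "{s::nat. 1 \<le> s \<and> int s < i \<and> a \<in> A s w} = {s\<in>{1..<nat i}. a \<in> A s w}" by auto
  then show ?thesis unfolding Nplays_def cnt_card by simp
qed

lemma Mobs_sum: "real (Mobs A D t a w) =
   (\<Sum>s\<in>{1..<t}. if a \<in> A s w \<and> enat s + D s a w < enat t then 1 else 0)"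
proof -
  have "{s::nat. 1 \<le> s \<and> s < t \<and> a \<in> A s w \<and> enat s + D s a w < enat t}
      = {s\<in>{1..<t}. a \<in> A s w \<and> enat s + D s a w < enat t}" by auto
  then show ?thesis unfolding Mobs_def by (simp add: sum_ind_card)
qed

lemma Sobs_sum: "Sobs A R D t a w =
   (\<Sum>s\<in>{1..<t}. if a \<in> A s w \<and> enat s + D s a w < enat t then R s a w else 0)"
proof -
  have "{s::nat. 1 \<le> s \<and> s < t \<and> a \<in> A s w \<and> enat s + D s a w < enat t}
      = {s\<in>{1..<t}. a \<in> A s w \<and> enat s + D s a w < enat t}" by auto
  then show ?thesis unfolding Sobs_def by (simp only:) (rule sum.inter_filter, simp)
qed

lemma mu_diff: "mu_plus A R D t a w - mu_minus A R D t a w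
   = (real (Nplays A (int t) a w) - real (Mobs A D t a w)) / real (Nplays A (int t) a w)"
  unfolding mu_plus_def mu_minus_def by (simp add: diff_divide_distrib[symmetric])

lemma C_le: "Cv A a n m w \<le> cnt A a m w \<and> Cv A a n m w \<le> real n"
proof (induction m)
  case 0 then show ?case by (simp add: Cv_def cnt_def)
next
  case (Suc m)
  show ?case
  proof (cases "m = 0")
    case True then show ?thesis by (simp add: Cv_def cnt_def)
  next
    case False
    then have C: "Cv A a n (Suc m) w = Cv A a n m w + Bv A a n m w"
      and N: "cnt A a (Suc m) w = cnt A a m w + pl A a m w"
      unfolding Cv_def cnt_def by (simp_all add: atLeastLessThanSuc)
    show ?thesis
    proof (cases "a \<in> A m w \<and> cnt A a m w < real n")
      case True
      then have "card {s\<in>{1..<m}. a \<in> A s w} < n" unfolding cnt_card by simp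
      then have "cnt A a m w + 1 \<le> real n" unfolding cnt_card by simp
      then show ?thesis using Suc.IH True C N by (simp add: Bv_def pl_def)
    next
      case False
      then have "Bv A a n m w = 0" by (simp add: Bv_def)
      moreover have "0 \<le> pl A a m w" by (simp add: pl_def)
      ultimately show ?thesis using Suc.IH C N by simp
    qed
  qed
qed

lemma Z_split: "Zv A D a d n p m w = (\<Sum>s\<in>{1..<m}. Bv A a n s w * Yd D a d s w) - p * Cv A a n m w"
  unfolding Zv_def Cv_def by (simp add: algebra_simps sum_subtractf sum_distrib_left)

lemma comb:
  fixes t k T a :: nat and A :: "nat \<Rightarrow> 'w \<Rightarrow> nat set" and w :: 'w
    and D :: "nat \<Rightarrow> nat \<Rightarrow> 'w \<Rightarrow> enat"
  assumes tT: "t \<le> T"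
  defines "P \<equiv> {s. 1 \<le> s \<and> s + k < t \<and> a \<in> A s w}"
  defines "U \<equiv> {s\<in>P. enat k < D s a w}"
  shows "card P \<le> Mobs A D t a w + card U"
    and "real (card U) \<le> (\<Sum>s\<in>{1..<Suc T}. Bv A a (card P) s w * Yd D a k s w)"
    and "Nplays A (int t - int k) a w = card P"
    and "card P \<le> Nplays A (int t) a w"
    and "card P \<le> T"
    and "card U \<le> card P"
proof -
  let ?O = "{s::nat. 1 \<le> s \<and> s < t \<and> a \<in> A s w \<and> enat s + D s a w < enat t}"
  have finP: "finite P" unfolding P_def by (rule finite_subset[of _ "{..<t}"]) auto
  have finO: "finite ?O" by (rule finite_subset[of _ "{..<t}"]) auto
  have finU: "finite U" using finP unfolding U_def by simp
  have "P \<subseteq> ?O \<union> U"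
  proof
    fix s assume s: "s \<in> P"
    show "s \<in> ?O \<union> U"
    proof (cases "enat k < D s a w")
      case True then show ?thesis using s unfolding U_def by simp
    next
      case False
      then have Dk: "D s a w \<le> enat k" by (simp add: not_less)
      then obtain j where j1: "D s a w = enat j" using enat_ile by blast
      with Dk have j2: "j \<le> k" by simp
      note j = j1 j2
      then have "enat s + D s a w < enat t" using s unfolding P_def by simp
      then show ?thesis using s unfolding P_def by auto
    qed
  qed
  then have "card P \<le> card (?O \<union> U)" using finO finU by (intro card_mono) auto
  also have "\<dots> \<le> card ?O + card U" by (rule card_Un_le)
  finally show "card P \<le> Mobs A D t a w + card U" unfolding Mobs_def .
  show "Nplays A (int t - int k) a w = card P"
    unfolding Nplays_def P_def by (rule arg_cong[where f=card]) auto
  show "card P \<le> Nplays A (int t) a w"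
    unfolding Nplays_def P_def by (rule card_mono) auto
  have "card P \<le> card {1..<t}" unfolding P_def by (rule card_mono) auto
  then show "card P \<le> T" using tT by simp
  show "card U \<le> card P" using finP unfolding U_def by (intro card_mono) auto
  have BU: "Bv A a (card P) s w * Yd D a k s w = 1" if s: "s \<in> U" for s
  proof -
    have sP: "s \<in> P" using s unfolding U_def by simp
    have sub: "{r\<in>{1..<s}. a \<in> A r w} \<subset> P"
    proof
      show "{r\<in>{1..<s}. a \<in> A r w} \<subseteq> P" using sP unfolding P_def by auto
      show "{r\<in>{1..<s}. a \<in> A r w} \<noteq> P" using sP by auto
    qed
    have "card {r\<in>{1..<s}. a \<in> A r w} < card P" by (rule psubset_card_mono[OF finP sub])
    then have "cnt A a s w < real (card P)" unfolding cnt_card by simp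
    then show ?thesis using s unfolding U_def P_def Bv_def Yd_def by simp
  qed
  have "real (card U) = (\<Sum>s\<in>U. Bv A a (card P) s w * Yd D a k s w)" using BU by simp
  also have "\<dots> \<le> (\<Sum>s\<in>{1..<Suc T}. Bv A a (card P) s w * Yd D a k s w)"
  proof (rule sum_mono2)
    show "U \<subseteq> {1..<Suc T}" using tT unfolding U_def P_def by auto
  qed (auto simp: Bv_def Yd_def)
  finally show "real (card U) \<le> (\<Sum>s\<in>{1..<Suc T}. Bv A a (card P) s w * Yd D a k s w)" .
qed




lemma bad_arith:
  fixes N n Mo X L q :: real
  assumes N: "N > 0" and nN: "n \<le> N" and n0: "0 \<le> n" and q: "q \<le> 1" and L: "L \<ge> 0"
    and nX: "n \<le> Mo + X"
    and bad: "\<not> ((N - Mo)/N \<le> (N - n)/N + 1 - q + sqrt(L/(2*N)))"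
  shows "n*(1-q) + sqrt(n*L/2) < X"
proof -
  have b1: "(N - n)/N + (1 - q) + sqrt(L/(2*N)) < (N - Mo)/N" using bad by simp
  have "N * ((N - n)/N + (1 - q) + sqrt(L/(2*N))) < N * ((N - Mo)/N)"
    using b1 N by (rule mult_strict_left_mono)
  moreover have "N * ((N - n)/N + (1 - q) + sqrt(L/(2*N))) = (N-n) + N*(1-q) + N* sqrt(L/(2*N))"
    using N by (simp add: distrib_left)
  moreover have "N*((N-Mo)/N) = N - Mo" using N by simp
  ultimately have b2: "(N - n) + N*(1 - q) + N * sqrt(L/(2*N)) < N - Mo" by simp
  have "N * sqrt(L/(2*N)) = sqrt(N^2) * sqrt(L/(2*N))" using N by simp
  also have "\<dots> = sqrt(N^2 * (L/(2*N)))" by (rule real_sqrt_mult[symmetric])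
  also have "N^2 * (L/(2*N)) = N*L/2" using N by (simp add: power2_eq_square field_simps)
  finally have e: "N * sqrt(L/(2*N)) = sqrt(N*L/2)" .
  have "sqrt(n*L/2) \<le> sqrt(N*L/2)" using nN L by (intro real_sqrt_le_mono divide_right_mono mult_right_mono) auto
  moreover have "n*(1-q) \<le> N*(1-q)" using nN q by (intro mult_right_mono) auto
  ultimately show ?thesis using b2 e nX by linarith
qed

lemma core_ineq:
  fixes n L Z C X p :: real
  assumes n: "n > 0" and L: "L > 0" and ZX: "X - p*n \<le> Z" and X: "n*p + sqrt(n*L/2) < X"
    and C0: "0 \<le> C" and Cn: "C \<le> n"
  shows "L \<le> sqrt(8*L/n) * Z - (sqrt(8*L/n))^2/8 * C"
proof -
  define lam where "lam = sqrt(8*L/n)"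
  have lam0: "0 < lam" unfolding lam_def using n L by simp
  have l2: "lam^2 = 8*L/n" unfolding lam_def using n L by simp
  have "lam * sqrt(n*L/2) = sqrt(8*L/n * (n*L/2))" unfolding lam_def by (rule real_sqrt_mult[symmetric])
  also have "8*L/n * (n*L/2) = (2*L)^2" using n by (simp add: field_simps power2_eq_square)
  finally have "lam * sqrt(n*L/2) = sqrt((2*L)^2)" .
  then have e: "lam * sqrt(n*L/2) = 2*L" using L by (simp only: real_sqrt_abs)
  have "sqrt(n*L/2) < Z" using ZX X mult.commute[of p n] by linarith
  then have "lam * sqrt(n*L/2) < lam * Z" using lam0 by simp
  moreover have "lam^2/8 * C \<le> lam^2/8 * n" using Cn l2 n L by (intro mult_left_mono) auto
  moreover have "lam^2/8 * n = L" using l2 n by simp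
  ultimately have "L \<le> lam * Z - lam^2/8 * C" using e by linarith
  then show ?thesis unfolding lam_def .
qed




context setting begin

lemma prob_D_shift:
  assumes m: "1 \<le> m"
  shows "prob {w\<in>space M. P (D m a w)} = prob {w\<in>space M. P (D 1 a w)}"
proof -
  let ?PB = "borel \<Otimes>\<^sub>M count_space UNIV :: (real \<times> enat) measure"
  let ?S = "{x\<in>space ?PB. P (snd x)}"
  have S: "?S \<in> sets ?PB" by (rule pred_count, rule measurable_snd)
  have e: "\<And>j. 1 \<le> j \<Longrightarrow> prob {w\<in>space M. P (D j a w)} = measure (distr M ?PB (\<lambda>w. (R j a w, D j a w))) ?S"
  proof -
    fix j :: nat assume j: "1 \<le> j"
    have "measure (distr M ?PB (\<lambda>w. (R j a w, D j a w))) ?S = prob ((\<lambda>w. (R j a w, D j a w)) -` ?S \<inter> space M)"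
      by (rule measure_distr[OF RD_meas_M[OF j] S])
    also have "(\<lambda>w. (R j a w, D j a w)) -` ?S \<inter> space M = {w\<in>space M. P (D j a w)}"
      by (auto simp: space_pair_measure)
    finally show "prob {w\<in>space M. P (D j a w)} = measure (distr M ?PB (\<lambda>w. (R j a w, D j a w))) ?S" by simp
  qed
  show ?thesis using e[OF m] e[of 1] RD_ident[OF m, of a] by simp
qed

lemma pp_bound:
  assumes dq: "delay_quantile M D a q = enat k" and m: "1 \<le> m"
  shows "prob {w\<in>space M. enat k < D m a w} \<le> 1 - q"
proof -
  have ex: "\<exists>\<gamma>::nat. measure M {w \<in> space M. D 1 a w \<le> enat \<gamma>} \<ge> q"
    using dq unfolding delay_quantile_def by (auto split: if_splits)
  then have k: "k = (LEAST \<gamma>::nat. measure M {w \<in> space M. D 1 a w \<le> enat \<gamma>} \<ge> q)"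
    using dq unfolding delay_quantile_def by simp
  have q1: "measure M {w \<in> space M. D 1 a w \<le> enat k} \<ge> q"
    unfolding k using ex by (rule LeastI_ex)
  have sets: "{w \<in> space M. D 1 a w \<le> enat k} \<in> sets M" by (rule D_M) simp
  have "space M - {w \<in> space M. D 1 a w \<le> enat k} = {w\<in>space M. enat k < D 1 a w}" by auto
  then have "prob {w\<in>space M. enat k < D 1 a w} = 1 - prob {w \<in> space M. D 1 a w \<le> enat k}"
    using prob_compl[OF sets] by simp
  then show ?thesis using prob_D_shift[OF m, of "\<lambda>x. enat k < x" a] q1 by simp
qed

lemma markov_G:
  assumes p: "0 \<le> p" "p \<le> 1" and lam: "0 < lam"
    and pp: "\<And>m. 1 \<le> m \<Longrightarrow> prob {w\<in>space M. enat d < D m a w} \<le> p"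
  shows "prob {w\<in>space M. exp c \<le> Gv A D a d n p lam m w} \<le> exp (- c)"
proof -
  have "prob {w\<in>space M. exp c \<le> Gv A D a d n p lam m w} \<le> expectation (\<lambda>w. Gv A D a d n p lam m w) / exp c"
  proof (rule integral_Markov_inequality_measure[where A="space M"])
    show "integrable M (\<lambda>w. Gv A D a d n p lam m w)" using G_int p lam by simp
    show "AE x in M. 0 \<le> Gv A D a d n p lam m x" by (rule AE_I2) (simp add: Gv_def)
  qed auto
  also have "\<dots> \<le> 1 / exp c" using G_exp[OF p lam pp] by (intro divide_right_mono) auto
  also have "\<dots> = exp (- c)" by (simp add: exp_minus field_simps)
  finally show ?thesis .
qed

lemma Nplays_meas: "(\<lambda>w. real (Nplays A i a w)) \<in> borel_measurable M"
  unfolding Nplays_cnt by (rule meas_cnt, rule A_M) simp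

lemma Mobs_meas: "(\<lambda>w. real (Mobs A D t a w)) \<in> borel_measurable M"
  unfolding Mobs_sum
proof (rule borel_measurable_sum, rule measurable_If)
  fix s assume s: "s \<in> {1..<t}"
  show "{w \<in> space M. a \<in> A s w \<and> enat s + D s a w < enat t} \<in> sets M"
    using s by (intro sets.sets_Collect_conj A_M D_M) auto
qed auto

lemma Sobs_meas: "(\<lambda>w. Sobs A R D t a w) \<in> borel_measurable M"
  unfolding Sobs_sum
proof (rule borel_measurable_sum, rule measurable_If)
  fix s assume s: "s \<in> {1..<t}"
  show "{w \<in> space M. a \<in> A s w \<and> enat s + D s a w < enat t} \<in> sets M"
    using s by (intro sets.sets_Collect_conj A_M D_M) auto
  show "(\<lambda>w. R s a w) \<in> borel_measurable M" using s by (intro fst_meas[OF RD_meas_M]) auto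
qed auto

lemma shift_meas: "(\<lambda>w. real (Nplays_shift A t dd a w)) \<in> borel_measurable M"
proof (cases dd)
  case (enat k) then show ?thesis unfolding Nplays_shift_def using Nplays_meas by simp
next
  case infinity then show ?thesis unfolding Nplays_shift_def by simp
qed

end




theorem mainTheorem10:
  fixes M :: "'w measure"
    and F :: "nat \<Rightarrow> 'w measure"
    and A :: "nat \<Rightarrow> 'w \<Rightarrow> nat set"
    and R :: "nat \<Rightarrow> nat \<Rightarrow> 'w \<Rightarrow> real"
    and D :: "nat \<Rightarrow> nat \<Rightarrow> 'w \<Rightarrow> enat"
    and K L T :: nat and q \<delta> :: real
  assumes prob: "prob_space M"
    and F_space: "\<And>t. space (F t) = space M"
    and F_sub: "\<And>t. sets (F t) \<subseteq> sets M"
    and F_mono: "\<And>s t. s \<le> t \<Longrightarrow> sets (F s) \<subseteq> sets (F t)"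
    and A_arms: "\<And>t w. 1 \<le> t \<Longrightarrow> w \<in> space M \<Longrightarrow> A t w \<subseteq> {1..K} \<and> card (A t w) = L"
    and A_meas: "\<And>t a. 1 \<le> t \<Longrightarrow> {w \<in> space M. a \<in> A t w} \<in> sets (F t)"
    and R_range: "\<And>t a w. 1 \<le> t \<Longrightarrow> w \<in> space M \<Longrightarrow> 0 \<le> R t a w \<and> R t a w \<le> 1"
    and RD_meas: "\<And>s t a. 1 \<le> s \<Longrightarrow> s < t \<Longrightarrow>
        (\<lambda>w. (R s a w, D s a w)) \<in> measurable (F t) (borel \<Otimes>\<^sub>M count_space UNIV)"
    and RD_meas_M: "\<And>t a. 1 \<le> t \<Longrightarrow>
        (\<lambda>w. (R t a w, D t a w)) \<in> measurable M (borel \<Otimes>\<^sub>M count_space UNIV)"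
    and RD_indep: "\<And>t a. 1 \<le> t \<Longrightarrow>
        prob_space.indep_set M (sets (F t))
          (sets (vimage_algebra (space M) (\<lambda>w. (R t a w, D t a w))
                   (borel \<Otimes>\<^sub>M count_space UNIV)))"
    and RD_ident: "\<And>t a. 1 \<le> t \<Longrightarrow>
        distr M (borel \<Otimes>\<^sub>M count_space UNIV) (\<lambda>w. (R t a w, D t a w))
        = distr M (borel \<Otimes>\<^sub>M count_space UNIV) (\<lambda>w. (R 1 a w, D 1 a w))"
    and q_pos: "0 < q" and q_le: "q \<le> 1"
    and delta_pos: "0 < \<delta>" and delta_lt: "\<delta> < 1"
  shows "measure M {w \<in> space M. \<forall>t\<in>{1..T}. \<forall>a\<in>{1..K}.
           Nplays A (int t) a w \<ge> 1 \<longrightarrow>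
             mu_plus A R D t a w - mu_minus A R D t a w
             \<le> (real (Nplays A (int t) a w)
                  - real (Nplays_shift A t (delay_quantile M D a q) a w))
                 / real (Nplays A (int t) a w)
               + 1 - q
               + sqrt (ln (3 * real K * real T / \<delta>) / (2 * real (Nplays A (int t) a w)))}
         \<ge> 1 - \<delta> / 3"
proof -
  interpret setting M F A R D
    by (rule setting.intro[OF prob setting_axioms.intro]) (fact F_space, fact F_sub, fact F_mono, fact A_meas, fact RD_meas,
        fact RD_meas_M, fact RD_indep, fact RD_ident)
  define LL where "LL = ln (3 * real K * real T / \<delta>)"
  define P where "P = (\<lambda>t a w. Nplays A (int t) a w \<ge> 1 \<longrightarrow>
             mu_plus A R D t a w - mu_minus A R D t a w
             \<le> (real (Nplays A (int t) a w)
                  - real (Nplays_shift A t (delay_quantile M D a q) a w))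
                 / real (Nplays A (int t) a w)
               + 1 - q
               + sqrt (LL / (2 * real (Nplays A (int t) a w))))"
  define G0 where "G0 = {w \<in> space M. \<forall>t\<in>{1..T}. \<forall>a\<in>{1..K}. P t a w}"
  have G0m: "G0 \<in> sets M"
    unfolding G0_def
  proof (intro sets.sets_Collect_finite_All finite_atLeastAtMost)
    fix t a
    have s1: "{w \<in> space M. 1 \<le> Nplays A (int t) a w} \<in> sets M"
    proof -
      have "{w \<in> space M. 1 \<le> Nplays A (int t) a w} = {w \<in> space M. 1 \<le> real (Nplays A (int t) a w)}" by simp
      also have "\<dots> \<in> sets M" using Nplays_meas by measurable
      finally show ?thesis .
    qed
    have mp: "(\<lambda>w. mu_plus A R D t a w) \<in> borel_measurable M"
      unfolding mu_plus_def using Nplays_meas Mobs_meas Sobs_meas by measurable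
    have mm: "(\<lambda>w. mu_minus A R D t a w) \<in> borel_measurable M"
      unfolding mu_minus_def using Nplays_meas Sobs_meas by measurable
    have rhs: "(\<lambda>w. (real (Nplays A (int t) a w)
                  - real (Nplays_shift A t (delay_quantile M D a q) a w))
                 / real (Nplays A (int t) a w)
               + 1 - q
               + sqrt (LL / (2 * real (Nplays A (int t) a w)))) \<in> borel_measurable M"
      using Nplays_meas shift_meas by measurable
    have s2: "{w \<in> space M. mu_plus A R D t a w - mu_minus A R D t a w
             \<le> (real (Nplays A (int t) a w)
                  - real (Nplays_shift A t (delay_quantile M D a q) a w))
                 / real (Nplays A (int t) a w)
               + 1 - q
               + sqrt (LL / (2 * real (Nplays A (int t) a w)))} \<in> sets M"
      using mp mm rhs by measurable
    show "{w \<in> space M. P t a w} \<in> sets M"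
      unfolding P_def by (rule sets.sets_Collect_imp[OF s2 s1])
  qed
  have main: "measure M G0 \<ge> 1 - \<delta> / 3"
  proof (cases "K = 0 \<or> T = 0")
    case True
    then have "G0 = space M" unfolding G0_def by auto
    then show ?thesis using prob_space delta_pos by simp
  next
    case False
    then have K1: "1 \<le> K" and T1: "1 \<le> T" by auto
    have "1 \<le> K * T" using K1 T1 by (simp add: Suc_le_eq)
    then have "1 \<le> real K * real T" by (metis of_nat_1 of_nat_le_iff of_nat_mult)
    then have KT: "3 \<le> 3 * real K * real T" by simp
    have pos: "1 < 3 * real K * real T / \<delta>" using KT delta_pos delta_lt by (simp add: field_simps)
    have LL0: "0 < LL" unfolding LL_def using pos by simp
    have expLL: "exp (- LL) = \<delta> / (3 * real K * real T)"
      unfolding LL_def using pos by (simp add: exp_minus exp_ln)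
    define E where "E a n = {w\<in>space M. \<exists>k. delay_quantile M D a q = enat k \<and>
        exp LL \<le> Gv A D a k n (1-q) (sqrt(8*LL/real n)) (Suc T) w}" for a n
    have Em: "E a n \<in> sets M" for a n
    proof (cases "delay_quantile M D a q")
      case (enat k)
      have "E a n = {w\<in>space M. exp LL \<le> Gv A D a k n (1-q) (sqrt(8*LL/real n)) (Suc T) w}"
        unfolding E_def using enat by simp
      also have "\<dots> \<in> sets M" by (rule borel_measurable_le[OF borel_measurable_const G_M])
      finally show ?thesis .
    next
      case infinity then have "E a n = {}" unfolding E_def by simp
      then show ?thesis by simp
    qed
    have Eb: "measure M (E a n) \<le> exp (- LL)" if n1: "1 \<le> n" for a n
    proof (cases "delay_quantile M D a q")
      case (enat k)
      have "E a n = {w\<in>space M. exp LL \<le> Gv A D a k n (1-q) (sqrt(8*LL/real n)) (Suc T) w}"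
        unfolding E_def using enat by simp
      also have "measure M \<dots> \<le> exp (- LL)"
      proof (rule markov_G)
        show "0 \<le> 1 - q" "1 - q \<le> 1" using q_pos q_le by auto
        show "0 < sqrt (8 * LL / real n)" using LL0 n1 by simp
        show "\<And>m. 1 \<le> m \<Longrightarrow> prob {w \<in> space M. enat k < D m a w} \<le> 1 - q"
          by (rule pp_bound[OF enat])
      qed
      finally show ?thesis .
    next
      case infinity then have "E a n = {}" unfolding E_def by simp
      then show ?thesis by simp
    qed
    have sub: "space M - G0 \<subseteq> (\<Union>a\<in>{1..K}. \<Union>n\<in>{1..T}. E a n)"
    proof
      fix w assume w: "w \<in> space M - G0"
      then obtain t a where t: "t\<in>{1..T}" and a: "a\<in>{1..K}" and nP: "\<not> P t a w"
        unfolding G0_def by auto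
      define N where "N = Nplays A (int t) a w"
      define Mo where "Mo = Mobs A D t a w"
      have nP2: "1 \<le> N \<and> \<not> (mu_plus A R D t a w - mu_minus A R D t a w \<le> (real N - real (Nplays_shift A t (delay_quantile M D a q) a w))/real N + 1 - q + sqrt(LL/(2*real N)))"
        using nP unfolding P_def N_def by blast
      have md: "mu_plus A R D t a w - mu_minus A R D t a w = (real N - real Mo)/real N"
        unfolding N_def Mo_def by (rule mu_diff)
      have N1: "1 \<le> N" using nP2 by blast
      have bad: "\<not> ((real N - real Mo)/real N \<le> (real N - real (Nplays_shift A t (delay_quantile M D a q) a w))/real N + 1 - q + sqrt(LL/(2*real N)))"
        using conjunct2[OF nP2] unfolding md by assumption
      have sq0: "0 \<le> sqrt(LL/(2*real N))" using LL0 by simp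
      show "w \<in> (\<Union>a\<in>{1..K}. \<Union>n\<in>{1..T}. E a n)"
      proof (cases "delay_quantile M D a q")
        case infinity
        then have sh: "Nplays_shift A t (delay_quantile M D a q) a w = 0" by (simp add: Nplays_shift_def)
        have "(real N - real Mo)/real N \<le> 1" using N1 by (simp add: divide_le_eq)
        moreover have "real N / real N = 1" using N1 by simp
        ultimately show ?thesis using bad sh sq0 q_le by simp
      next
        case (enat k)
        define Pset where "Pset = {s. 1 \<le> s \<and> s + k < t \<and> a \<in> A s w}"
        define U where "U = {s\<in>Pset. enat k < D s a w}"
        define n where "n = card Pset"
        have tT: "t \<le> T" using t by simp
        note c = comb(1,2,6)[where k=k and a=a and A=A and w=w and D=D, OF tT]
           comb(3,4,5)[where k=k and a=a and A=A and w=w, OF tT]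
        have c1: "n \<le> Mo + card U" using c(1) unfolding n_def U_def Pset_def Mo_def .
        have c2: "real (card U) \<le> (\<Sum>s\<in>{1..<Suc T}. Bv A a n s w * Yd D a k s w)"
          using c(2) unfolding n_def U_def Pset_def .
        have c3: "Nplays A (int t - int k) a w = n" using c(4) unfolding n_def Pset_def .
        have c4: "n \<le> N" using c(5) unfolding n_def Pset_def N_def .
        have c5: "n \<le> T" using c(6) unfolding n_def Pset_def .
        have c6: "card U \<le> n" using c(3) unfolding n_def U_def Pset_def .
        have sh: "Nplays_shift A t (delay_quantile M D a q) a w = n"
          using enat c3 by (simp add: Nplays_shift_def)
        have X: "real n * (1-q) + sqrt(real n * LL/2) < real (card U)"
        proof (rule bad_arith)
          show "0 < real N" using N1 by simp
          show "real n \<le> real N" using c4 by simp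
          show "real n \<le> real Mo + real (card U)" using c1 by simp
          show "\<not> ((real N - real Mo)/real N \<le> (real N - real n)/real N + 1 - q + sqrt(LL/(2*real N)))"
            using bad sh by simp
        qed (use q_le LL0 in auto)
        have n1: "1 \<le> n"
        proof (rule ccontr)
          assume "\<not> 1 \<le> n" then have "n = 0" by simp
          then show False using X c6 by simp
        qed
        let ?Z = "Zv A D a k n (1-q) (Suc T) w"
        let ?C = "Cv A a n (Suc T) w"
        have C0: "0 \<le> ?C" by (rule C_nonneg)
        have Cn: "?C \<le> real n" using C_le[of A a n "Suc T" w] by (rule conjunct2)
        have "(1-q) * ?C \<le> (1-q) * real n" using Cn q_le by (intro mult_left_mono) auto
        then have ZX: "real (card U) - (1-q) * real n \<le> ?Z"
          using Z_split[of A D a k n "1-q" "Suc T" w] c2 by linarith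
        have "LL \<le> sqrt(8*LL/real n) * ?Z - (sqrt(8*LL/real n))^2/8 * ?C"
          by (rule core_ineq[OF _ LL0 ZX _ C0 Cn]) (use n1 X in auto)
        then have "exp LL \<le> Gv A D a k n (1-q) (sqrt(8*LL/real n)) (Suc T) w"
          unfolding Gv_def by simp
        then have "w \<in> E a n" unfolding E_def using w enat by auto
        moreover have "n \<in> {1..T}" using n1 c5 by simp
        ultimately show ?thesis using a by blast
      qed
    qed
    have Um: "(\<Union>n\<in>{1..T}. E a n) \<in> sets M" for a
      by (intro sets.finite_UN finite_atLeastAtMost Em)
    have Um2: "(\<Union>a\<in>{1..K}. \<Union>n\<in>{1..T}. E a n) \<in> sets M"
      by (intro sets.finite_UN finite_atLeastAtMost Um)
    have "measure M (space M - G0) \<le> measure M (\<Union>a\<in>{1..K}. \<Union>n\<in>{1..T}. E a n)"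
      by (rule finite_measure_mono[OF sub Um2])
    also have "\<dots> \<le> (\<Sum>a\<in>{1..K}. measure M (\<Union>n\<in>{1..T}. E a n))"
      by (rule measure_UNION_le, simp, rule Um)
    also have "\<dots> \<le> (\<Sum>a\<in>{1..K}. \<Sum>n\<in>{1..T}. measure M (E a n))"
      by (intro sum_mono measure_UNION_le) (auto intro: Em)
    also have "\<dots> \<le> (\<Sum>a\<in>{1..K}. \<Sum>n\<in>{1..T}. exp (- LL))"
      by (intro sum_mono Eb) auto
    also have "\<dots> = real K * real T * exp (- LL)" by simp
    also have "\<dots> = \<delta> / 3" unfolding expLL using K1 T1 by (simp add: field_simps)
    finally have "measure M (space M - G0) \<le> \<delta> / 3" .
    then show ?thesis using prob_compl[OF G0m] by simp
  qed
  then show ?thesis unfolding G0_def P_def LL_def by simp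
qed


end
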